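(* Let $K$ be a field of characteristic $0$, let $W\le S_d$ be a permutation group and $\chi$ a one-dimensional character of $W$. For $n\in\mathbb N_0$ let $g_n(\chi;x_0,\dots,x_n)=\sum_{j\in J(n,d,\chi)}x_{j_1}\cdots x_{j_d}$ and let $g(\chi;x_0,x_1,x_2,\dots)=\sum_{j\in J(\mathbb N_0^d,\chi)}x_{j_1}\cdots x_{j_d}$ (a formal infinite sum of monomials). Then each $g_n$ is a symmetric polynomial in $x_0,\dots,x_n$, one has $g(\chi;x_0,\dots,x_n,0,0,\dots)=g_n(\chi;x_0,\dots,x_n)$ for all $n$, so that the sequence $(g_n)_{n\ge0}$ determines a symmetric function in the countably many variables $x_0,x_1,x_2,\dots$; this symmetric function coincides both with the characteristic of the polynomial functor $[\chi]^d(-)$ and with $g(\chi;x_0,x_1,x_2,\dots)$.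
   Context: A one-dimensional character of $W$ is a homomorphism $W\to K^\times$. For a $K$-linear space $E$, $W$ acts on $\otimes^d E$ by $\sigma(x_1\otimes\cdots\otimes x_d)=x_{\sigma^{-1}(1)}\otimes\cdots\otimes x_{\sigma^{-1}(d)}$; ${}_\chi(\otimes^dE)$ is the subspace spanned by all $\chi^{-1}(\sigma)z-\sigma z$ ($\sigma\in W$, $z\in\otimes^dE$); the semi-symmetric power is $[\chi]^d(E)=\otimes^dE/{}_\chi(\otimes^dE)$, with $x_1\chi\cdots\chi x_d$ the image of $x_1\otimes\cdots\otimes x_d$. For a linear map $l\colon E\to E'$, $[\chi]^d(l)$ is the linear map with $x_1\chi\cdots\chi x_d\mapsto l(x_1)\chi\cdots\chi l(x_d)$; this makes $[\chi]^d(-)$ a polynomial functor homogeneous of degree $d$ on finite-dimensional $K$-linear spaces. Index sets: for a well-ordered set $L$, $W$ acts on $L^d$ by $\sigma(i_1,\dots,i_d)=(i_{\sigma^{-1}(1)},\dots,i_{\sigma^{-1}(d)})$; $J(L^d,\chi)$ is the set of those elements $j\in L^d$ which are lexicographically minimal in their $W$-orbit and satisfy $\chi(\sigma)=1$ for all $\sigma$ in the stabilizer $W_j$. $J(n,d,\chi)=J([0,n]^d,\chi)$ with $[0,n]=\{0,1,\dots,n\}$, and $\mathbb N_0=\{0,1,2,\dots\}$. The characteristic of a polynomial functor $F$ homogeneous of degree $d$ is the symmetric function whose specialization $x_{n+1}=x_{n+2}=\cdots=0$ is, for each $n$, the trace of $F(\mathrm{diag}(x_0,\dots,x_n))$ acting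 on $F(K^{n+1})$, regarded as a polynomial in $x_0,\dots,x_n$. *)

theory Defs
  imports "HOL-Combinatorics.Permutations" "HOL-Library.Multiset"
begin

(* Positions are 0-based: S_d acts on {0..<d}; an element of L^d is a list of length d. *)

definition tuples :: "nat set \<Rightarrow> nat \<Rightarrow> nat list set" where
  "tuples L d = {j. length j = d \<and> set j \<subseteq> L}"

definition perm_act :: "nat \<Rightarrow> (nat \<Rightarrow> nat) \<Rightarrow> nat list \<Rightarrow> nat list" where
  "perm_act d \<sigma> j = map (\<lambda>i. j ! (inv \<sigma> i)) [0..<d]"

definition is_perm_group :: "nat \<Rightarrow> (nat \<Rightarrow> nat) set \<Rightarrow> bool" where
  "is_perm_group d W \<longleftrightarrow> W \<subseteq> {\<sigma>. \<sigma> permutes {0..<d}} \<and> id \<in> W \<and>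
     (\<forall>\<sigma>\<in>W. \<forall>\<tau>\<in>W. \<sigma> \<circ> \<tau> \<in> W) \<and> (\<forall>\<sigma>\<in>W. inv \<sigma> \<in> W)"

definition is_lin_char :: "(nat \<Rightarrow> nat) set \<Rightarrow> ((nat \<Rightarrow> nat) \<Rightarrow> 'a::field) \<Rightarrow> bool" where
  "is_lin_char W \<chi> \<longleftrightarrow> (\<forall>\<sigma>\<in>W. \<chi> \<sigma> \<noteq> 0) \<and> (\<forall>\<sigma>\<in>W. \<forall>\<tau>\<in>W. \<chi> (\<sigma> \<circ> \<tau>) = \<chi> \<sigma> * \<chi> \<tau>)"

(* J(L^d, chi): lexicographically minimal in the W-orbit, chi trivial on the stabilizer *)
definition Jset :: "nat \<Rightarrow> (nat \<Rightarrow> nat) set \<Rightarrow> ((nat \<Rightarrow> nat) \<Rightarrow> 'a::field) \<Rightarrow> nat set \<Rightarrow> nat list set" where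
  "Jset d W \<chi> L = {j \<in> tuples L d.
      (\<forall>\<sigma>\<in>W. perm_act d \<sigma> j = j \<or> (j, perm_act d \<sigma> j) \<in> lexord {(a, b). a < b}) \<and>
      (\<forall>\<sigma>\<in>W. perm_act d \<sigma> j = j \<longrightarrow> \<chi> \<sigma> = 1)}"

definition g_poly :: "nat \<Rightarrow> (nat \<Rightarrow> nat) set \<Rightarrow> ((nat \<Rightarrow> nat) \<Rightarrow> 'a::field) \<Rightarrow> nat \<Rightarrow> (nat \<Rightarrow> 'a) \<Rightarrow> 'a" where
  "g_poly d W \<chi> n x = (\<Sum>j\<in>Jset d W \<chi> {0..n}. \<Prod>i<d. x (j ! i))"

(* The formal series g(chi; x_0, x_1, ...), represented by its coefficients:
   coefficient of the monomial prod_k x_k^(count m k) *)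
definition g_coeff :: "nat \<Rightarrow> (nat \<Rightarrow> nat) set \<Rightarrow> ((nat \<Rightarrow> nat) \<Rightarrow> 'a::field) \<Rightarrow> nat multiset \<Rightarrow> nat" where
  "g_coeff d W \<chi> m = card {j \<in> Jset d W \<chi> UNIV. mset j = m}"

(* specialization x_{n+1} = x_{n+2} = ... = 0 of the formal series *)
definition g_spec :: "nat \<Rightarrow> (nat \<Rightarrow> nat) set \<Rightarrow> ((nat \<Rightarrow> nat) \<Rightarrow> 'a::field) \<Rightarrow> nat \<Rightarrow> (nat \<Rightarrow> 'a) \<Rightarrow> 'a" where
  "g_spec d W \<chi> n x = (\<Sum>m\<in>{m. size m = d \<and> set_mset m \<subseteq> {0..n}}.
      of_nat (g_coeff d W \<chi> m) * (\<Prod>k\<in>set_mset m. x k ^ count m k))"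

(* ---- tensor power of K^(n+1): functions on tuples with basis e_j, j \<in> [0,n]^d ---- *)
definition tensor_space :: "nat \<Rightarrow> nat \<Rightarrow> (nat list \<Rightarrow> 'a::field) set" where
  "tensor_space n d = {z. \<forall>j. z j \<noteq> 0 \<longrightarrow> j \<in> tuples {0..n} d}"

(* action of sigma on the tensor power: sigma(e_j) = e_(sigma j) *)
definition perm_tensor :: "nat \<Rightarrow> (nat \<Rightarrow> nat) \<Rightarrow> (nat list \<Rightarrow> 'a::field) \<Rightarrow> nat list \<Rightarrow> 'a" where
  "perm_tensor d \<sigma> z = (\<lambda>k. if length k = d then z (perm_act d (inv \<sigma>) k) else 0)"

definition lin_span :: "(nat list \<Rightarrow> 'a::field) set \<Rightarrow> (nat list \<Rightarrow> 'a) set" where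
  "lin_span S = {v. \<exists>F a. finite F \<and> F \<subseteq> S \<and> v = (\<lambda>k. \<Sum>s\<in>F. a s * s k)}"

definition chi_sub :: "nat \<Rightarrow> nat \<Rightarrow> (nat \<Rightarrow> nat) set \<Rightarrow> ((nat \<Rightarrow> nat) \<Rightarrow> 'a::field) \<Rightarrow> (nat list \<Rightarrow> 'a) set" where
  "chi_sub n d W \<chi> = lin_span {(\<lambda>k. inverse (\<chi> \<sigma>) * z k - perm_tensor d \<sigma> z k) | \<sigma> z.
       \<sigma> \<in> W \<and> z \<in> tensor_space n d}"

(* tensor^d l for the linear map l: K^(n+1) \<rightarrow> K^(n+1) with matrix A, l(e_b) = sum_a A a b e_a *)
definition tensor_map :: "nat \<Rightarrow> nat \<Rightarrow> (nat \<Rightarrow> nat \<Rightarrow> 'a::field) \<Rightarrow> (nat list \<Rightarrow> 'a) \<Rightarrow> nat list \<Rightarrow> 'a" where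
  "tensor_map n d A z = (\<lambda>j. if j \<in> tuples {0..n} d
      then (\<Sum>k\<in>tuples {0..n} d. (\<Prod>i<d. A (j ! i) (k ! i)) * z k) else 0)"

definition diag_mat :: "(nat \<Rightarrow> 'a::field) \<Rightarrow> nat \<Rightarrow> nat \<Rightarrow> 'a" where
  "diag_mat x a b = (if a = b then x a else 0)"

definition indep_mod :: "(nat list \<Rightarrow> 'a::field) set \<Rightarrow> (nat list \<Rightarrow> 'a) set \<Rightarrow> bool" where
  "indep_mod U B \<longleftrightarrow> (\<forall>a. (\<lambda>k. \<Sum>b\<in>B. a b * b k) \<in> U \<longrightarrow> (\<forall>b\<in>B. a b = 0))"

(* trace of the map induced by f on the quotient V/U, computed in a basis of V/U
   given by representatives B (the images of B form a basis of V/U) *)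
definition quot_trace :: "(nat list \<Rightarrow> 'a::field) set \<Rightarrow> (nat list \<Rightarrow> 'a) set \<Rightarrow>
    ((nat list \<Rightarrow> 'a) \<Rightarrow> (nat list \<Rightarrow> 'a)) \<Rightarrow> 'a" where
  "quot_trace V U f = (THE t. \<exists>B c. finite B \<and> B \<subseteq> V \<and> indep_mod U B \<and>
      (\<forall>v\<in>V. \<exists>u\<in>U. \<exists>a. v = (\<lambda>k. u k + (\<Sum>b\<in>B. a b * b k))) \<and>
      (\<forall>b\<in>B. (\<lambda>k. f b k - (\<Sum>b'\<in>B. c b b' * b' k)) \<in> U) \<and>
      t = (\<Sum>b\<in>B. c b b))"

(* trace of [chi]^d(diag(x_0,...,x_n)) on [chi]^d(K^(n+1)) *)
definition char_trace :: "nat \<Rightarrow> (nat \<Rightarrow> nat) set \<Rightarrow> ((nat \<Rightarrow> nat) \<Rightarrow> 'a::field) \<Rightarrow> nat \<Rightarrow> (nat \<Rightarrow> 'a) \<Rightarrow> 'a" where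
  "char_trace d W \<chi> n x = quot_trace (tensor_space n d) (chi_sub n d W \<chi>) (tensor_map n d (diag_mat x))"

end

theory Submission imports Defs "HOL-Library.List_Lexorder" begin

lemma perm_act_length[simp]: "length (perm_act d \<sigma> j) = d"
  by (simp add: perm_act_def)

lemma perm_act_nth: "i < d \<Longrightarrow> perm_act d \<sigma> j ! i = j ! inv \<sigma> i"
  by (simp add: perm_act_def)

lemma perm_act_comp:
  assumes "\<sigma> permutes {0..<d}" "\<tau> permutes {0..<d}"
  shows "perm_act d \<sigma> (perm_act d \<tau> j) = perm_act d (\<sigma> \<circ> \<tau>) j"
proof (rule nth_equalityI)
  fix i assume "i < length (perm_act d \<sigma> (perm_act d \<tau> j))"
  then have i: "i < d" by simp
  have "inv \<sigma> i < d" using permutes_inv[OF assms(1)] i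
    by (metis atLeastLessThan_iff permutes_in_image zero_le)
  moreover have "inv (\<sigma> \<circ> \<tau>) = inv \<tau> \<circ> inv \<sigma>"
    using o_inv_distrib permutes_bij assms by blast
  ultimately show "perm_act d \<sigma> (perm_act d \<tau> j) ! i = perm_act d (\<sigma> \<circ> \<tau>) j ! i"
    using i by (simp add: perm_act_nth)
qed simp

lemma perm_act_id[simp]: "length j = d \<Longrightarrow> perm_act d id j = j"
  by (rule nth_equalityI) (simp_all add: perm_act_nth)

lemma perm_act_set:
  assumes "\<sigma> permutes {0..<d}" "length j = d"
  shows "set (perm_act d \<sigma> j) = set j"
proof -
  have "set (perm_act d \<sigma> j) = (\<lambda>i. j ! i) ` (inv \<sigma> ` {0..<d})"
    by (auto simp add: perm_act_def)
  also have "inv \<sigma> ` {0..<d} = {0..<d}"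
    using permutes_inv[OF assms(1)] permutes_image by blast
  finally show ?thesis using assms(2) by (auto simp: set_conv_nth)
qed

lemma perm_act_map:
  assumes "\<sigma> permutes {0..<d}" "length j = d"
  shows "map \<pi> (perm_act d \<sigma> j) = perm_act d \<sigma> (map \<pi> j)"
proof (rule nth_equalityI)
  fix i assume "i < length (map \<pi> (perm_act d \<sigma> j))"
  then have i: "i < d" by simp
  have "inv \<sigma> i < d" using permutes_inv[OF assms(1)] i
    by (metis atLeastLessThan_iff permutes_in_image zero_le)
  then show "map \<pi> (perm_act d \<sigma> j) ! i = perm_act d \<sigma> (map \<pi> j) ! i"
    using i assms by (simp add: perm_act_nth)
qed simp

definition monom :: "nat \<Rightarrow> (nat \<Rightarrow> 'a::comm_monoid_mult) \<Rightarrow> nat list \<Rightarrow> 'a" where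
  "monom d x j = (\<Prod>i<d. x (j ! i))"

lemma monom_perm_act:
  assumes "\<sigma> permutes {0..<d}"
  shows "monom d x (perm_act d \<sigma> j) = monom d x j"
proof -
  have b: "bij_betw (inv \<sigma>) {..<d} {..<d}"
    using permutes_inv[OF assms] permutes_imp_bij atLeast0LessThan by metis
  have "monom d x (perm_act d \<sigma> j) = (\<Prod>i<d. x (j ! inv \<sigma> i))"
    unfolding monom_def by (rule prod.cong) (auto simp: perm_act_nth)
  also have "\<dots> = (\<Prod>i<d. x (j ! i))"
    using prod.reindex_bij_betw[OF b, of "\<lambda>i. x (j ! i)"] by simp
  finally show ?thesis by (simp add: monom_def)
qed


locale pg =
  fixes d :: nat and W :: "(nat \<Rightarrow> nat) set" and \<chi> :: "(nat \<Rightarrow> nat) \<Rightarrow> 'a::field"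
  assumes grp: "is_perm_group d W" and lc: "is_lin_char W \<chi>"
begin

lemma Wp: "\<sigma> \<in> W \<Longrightarrow> \<sigma> permutes {0..<d}" using grp by (auto simp: is_perm_group_def)
lemma Wid[simp]: "id \<in> W" using grp by (auto simp: is_perm_group_def)
lemma Wcomp: "\<sigma> \<in> W \<Longrightarrow> \<tau> \<in> W \<Longrightarrow> \<sigma> \<circ> \<tau> \<in> W" using grp by (auto simp: is_perm_group_def)
lemma Winv: "\<sigma> \<in> W \<Longrightarrow> inv \<sigma> \<in> W" using grp by (auto simp: is_perm_group_def)
lemma Wfin: "finite W"
  using grp finite_permutations[of "{0..<d}"] by (auto simp: is_perm_group_def intro: finite_subset)
lemma chi_nz: "\<sigma> \<in> W \<Longrightarrow> \<chi> \<sigma> \<noteq> 0" using lc by (auto simp: is_lin_char_def)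
lemma chi_mult: "\<sigma> \<in> W \<Longrightarrow> \<tau> \<in> W \<Longrightarrow> \<chi> (\<sigma> \<circ> \<tau>) = \<chi> \<sigma> * \<chi> \<tau>" using lc by (auto simp: is_lin_char_def)
lemma chi_id[simp]: "\<chi> id = 1"
proof -
  have "\<chi> id = \<chi> id * \<chi> id" using chi_mult[of id id] by simp
  then show ?thesis using chi_nz[of id] by simp
qed
lemma inv_cancel1: "\<sigma> \<in> W \<Longrightarrow> inv \<sigma> \<circ> \<sigma> = id"
  using Wp permutes_inv_o(2) by blast
lemma inv_cancel2: "\<sigma> \<in> W \<Longrightarrow> \<sigma> \<circ> inv \<sigma> = id"
  using Wp permutes_inv_o(1) by blast
lemma chi_inv: "\<sigma> \<in> W \<Longrightarrow> \<chi> (inv \<sigma>) = inverse (\<chi> \<sigma>)"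
proof -
  assume s: "\<sigma> \<in> W"
  have "\<chi> (inv \<sigma>) * \<chi> \<sigma> = 1" using chi_mult[OF Winv[OF s] s] inv_cancel1[OF s] by simp
  then show ?thesis using chi_nz[OF s] by (simp add: field_simps)
qed

lemma pa_comp: "\<sigma> \<in> W \<Longrightarrow> \<tau> \<in> W \<Longrightarrow> perm_act d \<sigma> (perm_act d \<tau> j) = perm_act d (\<sigma> \<circ> \<tau>) j"
  using perm_act_comp Wp by blast

lemma pa_inv: "\<sigma> \<in> W \<Longrightarrow> length j = d \<Longrightarrow> perm_act d (inv \<sigma>) (perm_act d \<sigma> j) = j"
  using pa_comp[OF Winv] inv_cancel1 by simp

lemma pa_inv2: "\<sigma> \<in> W \<Longrightarrow> length j = d \<Longrightarrow> perm_act d \<sigma> (perm_act d (inv \<sigma>) j) = j"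
  using pa_comp[OF _ Winv] inv_cancel2 by simp

lemma pa_tuples: "\<sigma> \<in> W \<Longrightarrow> length j = d \<Longrightarrow> (perm_act d \<sigma> j \<in> tuples L d) = (j \<in> tuples L d)"
proof -
  assume s: "\<sigma> \<in> W" and lj: "length j = d"
  show ?thesis
  proof
    assume "perm_act d \<sigma> j \<in> tuples L d"
    then have "length (perm_act d \<sigma> j) = d" "set (perm_act d \<sigma> j) \<subseteq> L" by (auto simp: tuples_def)
    moreover have "length j = d" using lj .
    ultimately show "j \<in> tuples L d" using perm_act_set[OF Wp[OF s]] by (simp add: tuples_def)
  next
    assume "j \<in> tuples L d"
    then show "perm_act d \<sigma> j \<in> tuples L d" using perm_act_set[OF Wp[OF s]] by (simp add: tuples_def)
  qed
qed

definition orbit :: "nat list \<Rightarrow> nat list set" where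
  "orbit k = (\<lambda>\<sigma>. perm_act d \<sigma> k) ` W"

definition stab :: "nat list \<Rightarrow> (nat \<Rightarrow> nat) set" where
  "stab k = {\<sigma> \<in> W. perm_act d \<sigma> k = k}"

definition good :: "nat list \<Rightarrow> bool" where
  "good k \<longleftrightarrow> (\<forall>\<sigma>\<in>stab k. \<chi> \<sigma> = 1)"

definition rep :: "nat list \<Rightarrow> nat list" where
  "rep k = Min (orbit k)"

lemma orbit_fin: "finite (orbit k)" using Wfin by (simp add: orbit_def)
lemma orbit_self: "length k = d \<Longrightarrow> k \<in> orbit k"
  unfolding orbit_def using Wid perm_act_id by (metis image_eqI)

lemma orbit_act: "\<tau> \<in> W \<Longrightarrow> length k = d \<Longrightarrow> orbit (perm_act d \<tau> k) = orbit k"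
proof -
  assume t: "\<tau> \<in> W" and k: "length k = d"
  show ?thesis
  proof
    show "orbit (perm_act d \<tau> k) \<subseteq> orbit k"
      unfolding orbit_def using pa_comp[OF _ t] Wcomp[OF _ t] by auto
    show "orbit k \<subseteq> orbit (perm_act d \<tau> k)"
    proof
      fix y assume "y \<in> orbit k"
      then obtain \<sigma> where s: "\<sigma> \<in> W" "y = perm_act d \<sigma> k" by (auto simp: orbit_def)
      have "y = perm_act d (\<sigma> \<circ> inv \<tau>) (perm_act d \<tau> k)"
      proof -
        have "perm_act d (\<sigma> \<circ> inv \<tau>) (perm_act d \<tau> k) = perm_act d \<sigma> (perm_act d (inv \<tau>) (perm_act d \<tau> k))"
          using pa_comp[OF s(1) Winv[OF t]] by simp
        also have "\<dots> = y" using pa_inv[OF t k] s(2) by simp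
        finally show ?thesis by simp
      qed
      then show "y \<in> orbit (perm_act d \<tau> k)"
        unfolding orbit_def using Wcomp[OF s(1) Winv[OF t]] by blast
    qed
  qed
qed

lemma orbit_mem_eq: "k' \<in> orbit k \<Longrightarrow> length k = d \<Longrightarrow> orbit k' = orbit k"
proof -
  assume a: "k' \<in> orbit k" "length k = d"
  then obtain \<tau> where t: "\<tau> \<in> W" "k' = perm_act d \<tau> k" by (auto simp: orbit_def)
  then show ?thesis using orbit_act a(2) by simp
qed

lemma rep_in: "length k = d \<Longrightarrow> rep k \<in> orbit k"
  unfolding rep_def using orbit_fin orbit_self by (metis Min_in empty_iff)

lemma rep_le: "k' \<in> orbit k \<Longrightarrow> rep k \<le> k'"
  unfolding rep_def using orbit_fin by simp

lemma rep_eq: "k' \<in> orbit k \<Longrightarrow> length k = d \<Longrightarrow> rep k' = rep k"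
  unfolding rep_def using orbit_mem_eq by simp

lemma orbit_length: "k' \<in> orbit k \<Longrightarrow> length k' = d"
  unfolding orbit_def by auto

lemma good_act:
  assumes t: "\<tau> \<in> W" and k: "length k = d" and g: "good k"
  shows "good (perm_act d \<tau> k)"
  unfolding good_def
proof
  fix \<sigma> assume "\<sigma> \<in> stab (perm_act d \<tau> k)"
  then have s: "\<sigma> \<in> W" "perm_act d \<sigma> (perm_act d \<tau> k) = perm_act d \<tau> k" by (auto simp: stab_def)
  have W1: "inv \<tau> \<circ> \<sigma> \<circ> \<tau> \<in> W" using Wcomp Winv s t by blast
  have "perm_act d (inv \<tau> \<circ> \<sigma> \<circ> \<tau>) k = perm_act d (inv \<tau>) (perm_act d \<sigma> (perm_act d \<tau> k))"
    using pa_comp[OF Wcomp[OF Winv[OF t] s(1)] t] pa_comp[OF Winv[OF t] s(1)] by simp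
  also have "\<dots> = k" using s pa_inv t k by simp
  finally have "\<chi> (inv \<tau> \<circ> \<sigma> \<circ> \<tau>) = 1" using g W1 by (auto simp: good_def stab_def)
  moreover have "\<chi> (inv \<tau> \<circ> \<sigma> \<circ> \<tau>) = \<chi> (inv \<tau> \<circ> \<sigma>) * \<chi> \<tau>"
    using chi_mult Wcomp Winv s t by blast
  moreover have "\<chi> (inv \<tau> \<circ> \<sigma>) = inverse (\<chi> \<tau>) * \<chi> \<sigma>"
    using chi_mult chi_inv Winv s t by simp
  ultimately have "inverse (\<chi> \<tau>) * \<chi> \<sigma> * \<chi> \<tau> = 1" by simp
  moreover have "inverse (\<chi> \<tau>) * \<chi> \<sigma> * \<chi> \<tau> = \<chi> \<sigma>"
    using chi_nz[OF t] by simp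
  ultimately show "\<chi> \<sigma> = 1" by simp
qed

lemma good_orbit: "k' \<in> orbit k \<Longrightarrow> length k = d \<Longrightarrow> good k' = good k"
proof -
  assume a: "k' \<in> orbit k" "length k = d"
  then obtain \<tau> where t: "\<tau> \<in> W" "k' = perm_act d \<tau> k" by (auto simp: orbit_def)
  have l: "length k' = d" using t by simp
  have 1: "good k \<Longrightarrow> good k'" using good_act[OF t(1) a(2)] t(2) by simp
  have "perm_act d (inv \<tau>) k' = k" using t pa_inv a(2) by simp
  then have 2: "good k' \<Longrightarrow> good k" using good_act[OF Winv[OF t(1)] l] by simp
  show ?thesis using 1 2 by blast
qed

lemma Jset_iff: "j \<in> Jset d W \<chi> L \<longleftrightarrow> j \<in> tuples L d \<and> rep j = j \<and> good j"
proof -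
  have A: "(\<forall>\<sigma>\<in>W. perm_act d \<sigma> j = j \<or> (j, perm_act d \<sigma> j) \<in> lexord {(a, b). a < b})
      \<longleftrightarrow> (\<forall>k\<in>orbit j. j \<le> k)"
  proof -
    have "\<And>k. j \<le> k \<longleftrightarrow> k = j \<or> (j, k) \<in> lexord {(a, b). a < b}"
      unfolding list_le_def list_less_def by blast
    then show ?thesis unfolding orbit_def by (simp add: eq_commute)
  qed
  have B: "length j = d \<Longrightarrow> (\<forall>k\<in>orbit j. j \<le> k) \<longleftrightarrow> rep j = j"
  proof -
    assume l: "length j = d"
    show ?thesis
    proof
      assume a: "\<forall>k\<in>orbit j. j \<le> k"
      have "j \<le> rep j" using a rep_in[OF l] by blast
      moreover have "rep j \<le> j" using rep_le orbit_self[OF l] by blast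
      ultimately show "rep j = j" by simp
    next
      assume "rep j = j" then show "\<forall>k\<in>orbit j. j \<le> k" using rep_le by metis
    qed
  qed
  have C: "(\<forall>\<sigma>\<in>W. perm_act d \<sigma> j = j \<longrightarrow> \<chi> \<sigma> = 1) \<longleftrightarrow> good j"
    unfolding good_def stab_def by blast
  have D: "j \<in> Jset d W \<chi> L \<longleftrightarrow> j \<in> tuples L d \<and>
      (\<forall>\<sigma>\<in>W. perm_act d \<sigma> j = j \<or> (j, perm_act d \<sigma> j) \<in> lexord {(a, b). a < b}) \<and>
      (\<forall>\<sigma>\<in>W. perm_act d \<sigma> j = j \<longrightarrow> \<chi> \<sigma> = 1)"
    unfolding Jset_def by blast
  have E: "j \<in> tuples L d \<Longrightarrow> length j = d" by (simp add: tuples_def)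
  show ?thesis using A B C D E by blast
qed

lemma Jset_orbit: "j \<in> Jset d W \<chi> L \<Longrightarrow> j' \<in> Jset d W \<chi> L' \<Longrightarrow> j' \<in> orbit j \<Longrightarrow> j' = j"
proof -
  assume a: "j \<in> Jset d W \<chi> L" "j' \<in> Jset d W \<chi> L'" "j' \<in> orbit j"
  have "length j = d" using a(1) by (simp add: Jset_iff tuples_def)
  then have "rep j' = rep j" using rep_eq a(3) by blast
  then show ?thesis using a(1,2) by (simp add: Jset_iff)
qed

lemma tuples_fin: "finite L \<Longrightarrow> finite (tuples L d)"
  unfolding tuples_def using finite_lists_length_eq by (simp add: conj_commute)

lemma Jset_fin: "finite L \<Longrightarrow> finite (Jset d W \<chi> L)"
  using tuples_fin by (rule finite_subset[rotated]) (auto simp: Jset_def)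

end

context pg begin

lemma rep_same_orbit:
  assumes "length a = d" "length b = d" "rep a = rep b"
  shows "a \<in> orbit b"
proof -
  have "orbit (rep a) = orbit a" using orbit_mem_eq[OF rep_in] assms(1) by blast
  moreover have "orbit (rep b) = orbit b" using orbit_mem_eq[OF rep_in] assms(2) by blast
  ultimately show ?thesis using assms orbit_self by simp
qed

lemma orbit_map:
  assumes "inj \<pi>" "length a = d" "length b = d" "map \<pi> a \<in> orbit (map \<pi> b)"
  shows "a \<in> orbit b"
proof -
  obtain \<sigma> where s: "\<sigma> \<in> W" "map \<pi> a = perm_act d \<sigma> (map \<pi> b)" using assms(4) by (auto simp: orbit_def)
  then have "map \<pi> a = map \<pi> (perm_act d \<sigma> b)" using perm_act_map[OF Wp[OF s(1)] assms(3)] by simp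
  then have "a = perm_act d \<sigma> b" using assms(1) by simp
  then show ?thesis using s(1) by (auto simp: orbit_def)
qed

lemma good_map:
  assumes "inj \<pi>" "length k = d"
  shows "good (map \<pi> k) = good k"
proof -
  have "perm_act d \<sigma> (map \<pi> k) = map \<pi> k \<longleftrightarrow> perm_act d \<sigma> k = k" if s: "\<sigma> \<in> W" for \<sigma>
    using perm_act_map[OF Wp[OF s] assms(2), of \<pi>] assms(1) by (metis inj_map_eq_map)
  then have "stab (map \<pi> k) = stab k"
    unfolding stab_def by blast
  then show ?thesis by (simp add: good_def)
qed

lemma mono_orbit: "k' \<in> orbit k \<Longrightarrow> monom d x k' = monom d x k"
proof -
  assume "k' \<in> orbit k"
  then obtain \<sigma> where s: "\<sigma> \<in> W" "k' = perm_act d \<sigma> k" by (auto simp: orbit_def)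
  then show ?thesis using monom_perm_act[OF Wp[OF s(1)]] by simp
qed

lemma mono_map: "monom d x (map \<pi> j) = monom d (x \<circ> \<pi>) j" if "length j = d"
  unfolding monom_def using that by simp

lemma part1:
  assumes p: "\<pi> permutes {0..n}"
  shows "g_poly d W \<chi> n (x \<circ> \<pi>) = g_poly d W \<chi> n x"
proof -
  define J where "J = Jset d W \<chi> {0..n}"
  define \<Phi> where "\<Phi> j = rep (map \<pi> j)" for j
  have ip: "inj \<pi>" using p permutes_inj by blast
  have lJ: "j \<in> J \<Longrightarrow> length j = d" for j by (simp add: J_def Jset_iff tuples_def)
  have mt: "map \<pi> j \<in> tuples {0..n} d" if "j \<in> J" for j
  proof -
    have "set j \<subseteq> {0..n}" using that by (simp add: J_def Jset_iff tuples_def)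
    then have "\<pi> ` set j \<subseteq> {0..n}" using permutes_image[OF p] by blast
    then show ?thesis using lJ[OF that] by (simp add: tuples_def)
  qed
  have PJ: "\<Phi> j \<in> J" if j: "j \<in> J" for j
  proof -
    have l: "length (map \<pi> j) = d" using lJ[OF j] by simp
    have o: "\<Phi> j \<in> orbit (map \<pi> j)" unfolding \<Phi>_def using rep_in[OF l] .
    then obtain \<sigma> where s: "\<sigma> \<in> W" "\<Phi> j = perm_act d \<sigma> (map \<pi> j)" by (auto simp: orbit_def)
    have 1: "\<Phi> j \<in> tuples {0..n} d" using s pa_tuples[OF s(1) l] mt[OF j] by simp
    have 2: "rep (\<Phi> j) = \<Phi> j" using rep_eq[OF o l] by (simp add: \<Phi>_def)
    have "good j" using j by (simp add: J_def Jset_iff)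
    then have 3: "good (\<Phi> j)" using good_orbit[OF o l] good_map[OF ip lJ[OF j]] by simp
    show ?thesis using 1 2 3 by (simp add: J_def Jset_iff)
  qed
  have inj: "inj_on \<Phi> J"
  proof (rule inj_onI)
    fix a b assume a: "a \<in> J" and b: "b \<in> J" and e: "\<Phi> a = \<Phi> b"
    have "map \<pi> a \<in> orbit (map \<pi> b)"
      using rep_same_orbit[of "map \<pi> a" "map \<pi> b"] lJ[OF a] lJ[OF b] e by (simp add: \<Phi>_def)
    then have "a \<in> orbit b" using orbit_map[OF ip lJ[OF a] lJ[OF b]] by simp
    then show "a = b" using Jset_orbit a b unfolding J_def by metis
  qed
  have fin: "finite J" unfolding J_def by (rule Jset_fin) simp
  have im: "\<Phi> ` J = J" using endo_inj_surj[OF fin _ inj] PJ by blast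
  have "g_poly d W \<chi> n x = (\<Sum>j\<in>J. monom d x j)" by (simp add: g_poly_def J_def monom_def)
  also have "\<dots> = (\<Sum>j\<in>J. monom d x (\<Phi> j))"
    using sum.reindex[OF inj, of "monom d x"] im by simp
  also have "\<dots> = (\<Sum>j\<in>J. monom d (x \<circ> \<pi>) j)"
  proof (rule sum.cong)
    fix j assume j: "j \<in> J"
    have l: "length (map \<pi> j) = d" using lJ[OF j] by simp
    have "monom d x (\<Phi> j) = monom d x (map \<pi> j)" unfolding \<Phi>_def using mono_orbit[OF rep_in[OF l]] .
    then show "monom d x (\<Phi> j) = monom d (x \<circ> \<pi>) j" using mono_map lJ[OF j] by simp
  qed simp
  also have "\<dots> = g_poly d W \<chi> n (x \<circ> \<pi>)" by (simp add: g_poly_def J_def monom_def)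
  finally show ?thesis by simp
qed

end

lemma monom_mset: "length j = d \<Longrightarrow> monom d x j = (\<Prod>k\<in>set_mset (mset j). x k ^ count (mset j) k)"
proof -
  assume l: "length j = d"
  have "(\<Prod>k\<in>set_mset (mset j). x k ^ count (mset j) k) = prod_mset (image_mset x (mset j))"
    by (rule image_prod_mset_multiplicity[symmetric])
  also have "\<dots> = prod_list (map x j)" by (simp add: prod_mset_prod_list[symmetric])
  also have "\<dots> = (\<Prod>i\<in>{0..<length j}. map x j ! i)" by (simp add: prod.list_conv_set_nth)
  also have "\<dots> = monom d x j" unfolding monom_def using l by (simp add: atLeast0LessThan)
  finally show ?thesis by simp
qed

context pg begin

lemma part2: "g_spec d W \<chi> n x = g_poly d W \<chi> n x"
proof -
  define J where "J = Jset d W \<chi> {0..n}"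
  define Ms where "Ms = {m. size m = d \<and> set_mset m \<subseteq> {0..n}}"
  define P where "P m = (\<Prod>k\<in>set_mset m. x k ^ count m k)" for m
  have finJ: "finite J" unfolding J_def by (rule Jset_fin) simp
  have MsT: "Ms \<subseteq> mset ` tuples {0..n} d"
  proof
    fix m assume "m \<in> Ms"
    moreover obtain xs where "mset xs = m" using ex_mset by blast
    ultimately show "m \<in> mset ` tuples {0..n} d" unfolding Ms_def tuples_def
      by (metis (mono_tags, lifting) image_eqI mem_Collect_eq set_mset_mset size_mset)
  qed
  have finMs: "finite Ms" using finite_subset[OF MsT] tuples_fin by blast
  have JMs: "mset ` J \<subseteq> Ms"
  proof
    fix m assume "m \<in> mset ` J"
    then obtain j where j: "j \<in> J" "m = mset j" by blast
    then have "length j = d" "set j \<subseteq> {0..n}" unfolding J_def by (simp_all add: Jset_iff tuples_def)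
    then show "m \<in> Ms" using j(2) unfolding Ms_def by simp
  qed
  have eqset: "{j \<in> Jset d W \<chi> UNIV. mset j = m} = {j \<in> J. mset j = m}" if m: "m \<in> Ms" for m
  proof -
    have "j \<in> Jset d W \<chi> UNIV \<longleftrightarrow> j \<in> J" if "mset j = m" for j
    proof -
      have "length j = d" "set j \<subseteq> {0..n}" using that m unfolding Ms_def
        by auto
      then show ?thesis unfolding J_def by (simp add: Jset_iff tuples_def)
    qed
    then show ?thesis by blast
  qed
  have "g_poly d W \<chi> n x = (\<Sum>j\<in>J. P (mset j))"
    unfolding g_poly_def P_def
  proof (rule sum.cong)
    fix j assume "j \<in> J"
    then have "length j = d" unfolding J_def by (simp add: Jset_iff tuples_def)
    then show "(\<Prod>i<d. x (j ! i)) = (\<Prod>k\<in>set_mset (mset j). x k ^ count (mset j) k)"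
      using monom_mset[of j d x] by (simp add: monom_def)
  qed (simp add: J_def)
  also have "\<dots> = (\<Sum>m\<in>Ms. \<Sum>j\<in>{j \<in> J. mset j = m}. P (mset j))"
    by (rule sum.group[OF finJ finMs JMs, symmetric])
  also have "\<dots> = (\<Sum>m\<in>Ms. of_nat (card {j \<in> J. mset j = m}) * P m)"
    by (rule sum.cong) auto
  also have "\<dots> = g_spec d W \<chi> n x"
    unfolding g_spec_def g_coeff_def Ms_def[symmetric] P_def[symmetric]
    by (rule sum.cong) (auto simp: eqset)
  finally show ?thesis by simp
qed

end

lemma ls_zero: "(\<lambda>k. 0) \<in> lin_span S"
  unfolding lin_span_def by (rule CollectI, rule exI[of _ "{}"]) auto

lemma ls_gen: "s \<in> S \<Longrightarrow> s \<in> lin_span S"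
  unfolding lin_span_def by (rule CollectI, rule exI[of _ "{s}"], rule exI[of _ "\<lambda>_. 1"]) auto

lemma ls_scale: "u \<in> lin_span S \<Longrightarrow> (\<lambda>k. c * u k) \<in> lin_span S"
proof -
  assume "u \<in> lin_span S"
  then obtain F a where F: "finite F" "F \<subseteq> S" "u = (\<lambda>k. \<Sum>s\<in>F. a s * s k)" unfolding lin_span_def by blast
  have "(\<lambda>k. c * u k) = (\<lambda>k. \<Sum>s\<in>F. (c * a s) * s k)"
    using F(3) by (simp add: sum_distrib_left mult.assoc)
  then show ?thesis using F(1,2) unfolding lin_span_def
    by (intro CollectI exI[of _ F] exI[of _ "\<lambda>s. c * a s"]) simp
qed

lemma ls_add: "u \<in> lin_span S \<Longrightarrow> v \<in> lin_span S \<Longrightarrow> (\<lambda>k. u k + v k) \<in> lin_span S"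
proof -
  assume uv: "u \<in> lin_span S" "v \<in> lin_span S"
  obtain F1 a1 where F1: "finite F1" "F1 \<subseteq> S" "u = (\<lambda>k. \<Sum>s\<in>F1. a1 s * s k)"
    using uv(1) unfolding lin_span_def by blast
  obtain F2 a2 where F2: "finite F2" "F2 \<subseteq> S" "v = (\<lambda>k. \<Sum>s\<in>F2. a2 s * s k)"
    using uv(2) unfolding lin_span_def by blast
  note F = F1 F2
  define a where "a s = (if s \<in> F1 then a1 s else 0) + (if s \<in> F2 then a2 s else 0)" for s
  have fin: "finite (F1 \<union> F2)" using F by simp
  have key: "(\<Sum>s\<in>F1 \<union> F2. a s * s k) = (\<Sum>s\<in>F1. a1 s * s k) + (\<Sum>s\<in>F2. a2 s * s k)" for k
  proof -
    have "(\<Sum>s\<in>F1 \<union> F2. a s * s k) = (\<Sum>s\<in>F1 \<union> F2. if s \<in> F1 then a1 s * s k else 0)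
        + (\<Sum>s\<in>F1 \<union> F2. if s \<in> F2 then a2 s * s k else 0)"
      unfolding sum.distrib[symmetric]
    proof (rule sum.cong[OF refl])
      fix s show "a s * s k = (if s \<in> F1 then a1 s * s k else 0) + (if s \<in> F2 then a2 s * s k else 0)"
        unfolding a_def by (cases "s \<in> F1"; cases "s \<in> F2") (simp_all add: distrib_right)
    qed
    also have "(\<Sum>s\<in>F1 \<union> F2. if s \<in> F1 then a1 s * s k else 0) = (\<Sum>s\<in>F1. a1 s * s k)"
      using sum.inter_restrict[OF fin, of "\<lambda>s. a1 s * s k" F1] by (simp add: Int_absorb1)
    also have "(\<Sum>s\<in>F1 \<union> F2. if s \<in> F2 then a2 s * s k else 0) = (\<Sum>s\<in>F2. a2 s * s k)"
      using sum.inter_restrict[OF fin, of "\<lambda>s. a2 s * s k" F2] by (simp add: Int_absorb1)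
    finally show ?thesis .
  qed
  have "(\<lambda>k. u k + v k) = (\<lambda>k. \<Sum>s\<in>F1 \<union> F2. a s * s k)"
  proof
    fix k show "u k + v k = (\<Sum>s\<in>F1 \<union> F2. a s * s k)" unfolding key F1(3) F2(3) by (rule refl)
  qed
  moreover have "F1 \<union> F2 \<subseteq> S" using F1(2) F2(2) by blast
  ultimately show ?thesis using fin unfolding lin_span_def
    by (intro CollectI exI[of _ "F1 \<union> F2"] exI[of _ a]) simp
qed

lemma ls_diff: "u \<in> lin_span S \<Longrightarrow> v \<in> lin_span S \<Longrightarrow> (\<lambda>k. u k - v k) \<in> lin_span S"
proof -
  assume a: "u \<in> lin_span S" "v \<in> lin_span S"
  have "(\<lambda>k. u k + (- 1) * v k) \<in> lin_span S" by (rule ls_add[OF a(1) ls_scale[OF a(2)]])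
  then show ?thesis by simp
qed

lemma ls_sum: "finite I \<Longrightarrow> (\<forall>i\<in>I. u i \<in> lin_span S) \<Longrightarrow> (\<lambda>k. \<Sum>i\<in>I. c i * u i k) \<in> lin_span S"
proof (induction I rule: finite_induct)
  case empty then show ?case using ls_zero by simp
next
  case (insert i I)
  have "(\<lambda>k. c i * u i k + (\<Sum>i\<in>I. c i * u i k)) \<in> lin_span S"
    using ls_add[OF ls_scale[of "u i" S "c i"] insert.IH] insert.prems by simp
  then show ?case using insert by simp
qed


definition ek :: "nat list \<Rightarrow> nat list \<Rightarrow> 'a::field" where
  "ek j = (\<lambda>k. if k = j then 1 else 0)"

lemma prod_diag:
  assumes "length a = d" "length b = d"
  shows "(\<Prod>i<d. diag_mat x (a ! i) (b ! i)) = (if b = a then monom d x a else 0)"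
proof (cases "b = a")
  case True then show ?thesis by (simp add: diag_mat_def monom_def)
next
  case False
  then obtain i where i: "i < d" "a ! i \<noteq> b ! i" using assms nth_equalityI by metis
  then have "(\<Prod>i<d. diag_mat x (a ! i) (b ! i)) = 0"
    by (intro prod_zero) (auto simp: diag_mat_def intro!: bexI[of _ i])
  then show ?thesis using False by simp
qed

locale pg3 = pg d W \<chi> for d W and \<chi> :: "(nat \<Rightarrow> nat) \<Rightarrow> 'a::field_char_0" +
  fixes n :: nat and x :: "nat \<Rightarrow> 'a"
begin

abbreviation "T \<equiv> tuples {0..n} d"
abbreviation "V \<equiv> tensor_space n d :: (nat list \<Rightarrow> 'a) set"
abbreviation "U \<equiv> chi_sub n d W \<chi>"
abbreviation "f \<equiv> tensor_map n d (diag_mat x)"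
abbreviation "J \<equiv> Jset d W \<chi> {0..n}"

definition phi :: "nat list \<Rightarrow> (nat list \<Rightarrow> 'a) \<Rightarrow> 'a" where
  "phi j z = (\<Sum>\<tau>\<in>W. inverse (\<chi> \<tau>) * z (perm_act d \<tau> j))"

lemma phi_lin: "phi j (\<lambda>k. \<Sum>i\<in>I. a i * g i k) = (\<Sum>i\<in>I. a i * phi j (g i))"
proof -
  have "phi j (\<lambda>k. \<Sum>i\<in>I. a i * g i k) = (\<Sum>\<tau>\<in>W. \<Sum>i\<in>I. a i * (inverse (\<chi> \<tau>) * g i (perm_act d \<tau> j)))"
    unfolding phi_def by (simp add: sum_distrib_left mult_ac)
  also have "\<dots> = (\<Sum>i\<in>I. \<Sum>\<tau>\<in>W. a i * (inverse (\<chi> \<tau>) * g i (perm_act d \<tau> j)))"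
    by (rule sum.swap)
  also have "\<dots> = (\<Sum>i\<in>I. a i * phi j (g i))"
    unfolding phi_def by (simp add: sum_distrib_left)
  finally show ?thesis .
qed

lemma phi_add: "phi j (\<lambda>k. u k + v k) = phi j u + phi j v"
  unfolding phi_def by (simp add: distrib_left sum.distrib)

lemma phi_diff: "phi j (\<lambda>k. u k - v k) = phi j u - phi j v"
  unfolding phi_def by (simp add: right_diff_distrib sum_subtractf)

lemma phi_scale: "phi j (\<lambda>k. c * u k) = c * phi j u"
  unfolding phi_def by (simp add: sum_distrib_left mult_ac)

lemma bij_left:
  assumes s: "\<sigma> \<in> W" shows "bij_betw (\<lambda>\<rho>. \<sigma> \<circ> \<rho>) W W"
proof (rule bij_betw_byWitness[where f' = "\<lambda>\<tau>. inv \<sigma> \<circ> \<tau>"])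
  show "\<forall>a\<in>W. inv \<sigma> \<circ> (\<sigma> \<circ> a) = a" using inv_cancel1[OF s] by (simp add: comp_assoc[symmetric])
  show "\<forall>a\<in>W. \<sigma> \<circ> (inv \<sigma> \<circ> a) = a" using inv_cancel2[OF s] by (simp add: comp_assoc[symmetric])
  show "(\<circ>) \<sigma> ` W \<subseteq> W" using Wcomp[OF s] by blast
  show "(\<circ>) (inv \<sigma>) ` W \<subseteq> W" using Wcomp[OF Winv[OF s]] by blast
qed

lemma phi_pt:
  assumes s: "\<sigma> \<in> W" and j: "length j = d"
  shows "phi j (perm_tensor d \<sigma> z) = inverse (\<chi> \<sigma>) * phi j z"
proof -
  have "phi j (perm_tensor d \<sigma> z) = (\<Sum>\<tau>\<in>W. inverse (\<chi> \<tau>) * z (perm_act d (inv \<sigma> \<circ> \<tau>) j))"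
    unfolding phi_def perm_tensor_def
    by (rule sum.cong) (simp_all add: pa_comp[OF Winv[OF s]])
  also have "\<dots> = (\<Sum>\<rho>\<in>W. inverse (\<chi> (\<sigma> \<circ> \<rho>)) * z (perm_act d (inv \<sigma> \<circ> (\<sigma> \<circ> \<rho>)) j))"
    by (rule sum.reindex_bij_betw[OF bij_left[OF s], symmetric])
  also have "\<dots> = (\<Sum>\<rho>\<in>W. inverse (\<chi> \<sigma>) * (inverse (\<chi> \<rho>) * z (perm_act d \<rho> j)))"
  proof (rule sum.cong[OF refl])
    fix \<rho> assume r: "\<rho> \<in> W"
    have "inv \<sigma> \<circ> (\<sigma> \<circ> \<rho>) = \<rho>" using inv_cancel1[OF s] by (simp add: comp_assoc[symmetric])
    then show "inverse (\<chi> (\<sigma> \<circ> \<rho>)) * z (perm_act d (inv \<sigma> \<circ> (\<sigma> \<circ> \<rho>)) j) =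
        inverse (\<chi> \<sigma>) * (inverse (\<chi> \<rho>) * z (perm_act d \<rho> j))"
      using chi_mult[OF s r] by (simp add: mult_ac)
  qed
  also have "\<dots> = inverse (\<chi> \<sigma>) * phi j z" unfolding phi_def by (simp add: sum_distrib_left)
  finally show ?thesis .
qed

lemma phi_gen: "\<sigma> \<in> W \<Longrightarrow> length j = d \<Longrightarrow>
    phi j (\<lambda>k. inverse (\<chi> \<sigma>) * z k - perm_tensor d \<sigma> z k) = 0"
  by (simp add: phi_diff phi_scale phi_pt)

lemma phi_U:
  assumes u: "u \<in> U" and j: "length j = d"
  shows "phi j u = 0"
proof -
  obtain F a where F: "finite F" "F \<subseteq> {(\<lambda>k. inverse (\<chi> \<sigma>) * z k - perm_tensor d \<sigma> z k) | \<sigma> z.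
       \<sigma> \<in> W \<and> z \<in> tensor_space n d}" "u = (\<lambda>k. \<Sum>s\<in>F. a s * s k)"
    using u unfolding chi_sub_def lin_span_def by blast
  have "phi j u = (\<Sum>s\<in>F. a s * phi j s)" using F(3) phi_lin[where j=j and I=F and a=a and g="\<lambda>s. s"] by simp
  also have "\<dots> = 0"
  proof (rule sum.neutral, rule ballI)
    fix s assume "s \<in> F"
    then obtain \<sigma> z where "\<sigma> \<in> W" "s = (\<lambda>k. inverse (\<chi> \<sigma>) * z k - perm_tensor d \<sigma> z k)"
      using F(2) by blast
    then show "a s * phi j s = 0" using phi_gen j by simp
  qed
  finally show ?thesis .
qed

lemma phi_ek_out: "k \<notin> orbit j \<Longrightarrow> phi j (ek k) = 0"
  unfolding phi_def ek_def orbit_def by (rule sum.neutral) auto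

lemma stab_fin: "finite (stab j)" using Wfin by (simp add: stab_def)

lemma phi_ek_self:
  assumes "good j" "length j = d"
  shows "phi j (ek j) = of_nat (card (stab j))"
proof -
  have "phi j (ek j) = (\<Sum>\<tau>\<in>W. if perm_act d \<tau> j = j then inverse (\<chi> \<tau>) else 0)"
    unfolding phi_def ek_def by (rule sum.cong) auto
  also have "\<dots> = (\<Sum>\<tau>\<in>stab j. inverse (\<chi> \<tau>))"
    unfolding stab_def by (rule sum.inter_filter[OF Wfin, symmetric])
  also have "\<dots> = (\<Sum>\<tau>\<in>stab j. 1)" using assms(1) by (simp add: good_def)
  finally show ?thesis by simp
qed

lemma phi_ek_nz:
  assumes "good j" "length j = d"
  shows "phi j (ek j) \<noteq> 0"
proof -
  have "id \<in> stab j" using assms(2) by (simp add: stab_def)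
  then have "card (stab j) \<noteq> 0" using stab_fin by (metis card_0_eq empty_iff)
  then show ?thesis using phi_ek_self[OF assms] by simp
qed

lemma f_apply: "f z k = (if k \<in> T then monom d x k * z k else 0)"
proof (cases "k \<in> T")
  case True
  have lk: "length k = d" using True by (simp add: tuples_def)
  have "f z k = (\<Sum>k'\<in>T. (if k' = k then monom d x k else 0) * z k')"
    unfolding tensor_map_def using True
    by (simp, intro sum.cong refl) (simp add: prod_diag[OF lk] tuples_def)
  also have "\<dots> = (\<Sum>k'\<in>T. if k' = k then monom d x k * z k' else 0)"
    by (rule sum.cong) auto
  also have "\<dots> = monom d x k * z k" using True tuples_fin[of "{0..n}"] by (simp add: sum.delta)
  finally show ?thesis using True by simp
qed (simp add: tensor_map_def)

lemma phi_f:
  assumes j: "j \<in> T"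
  shows "phi j (f z) = monom d x j * phi j z"
proof -
  have lj: "length j = d" using j by (simp add: tuples_def)
  have "phi j (f z) = (\<Sum>\<tau>\<in>W. monom d x j * (inverse (\<chi> \<tau>) * z (perm_act d \<tau> j)))"
    unfolding phi_def
  proof (rule sum.cong[OF refl])
    fix \<tau> assume t: "\<tau> \<in> W"
    have "perm_act d \<tau> j \<in> T" using pa_tuples[OF t lj] j by simp
    then show "inverse (\<chi> \<tau>) * f z (perm_act d \<tau> j) = monom d x j * (inverse (\<chi> \<tau>) * z (perm_act d \<tau> j))"
      by (simp add: f_apply monom_perm_act[OF Wp[OF t]])
  qed
  also have "\<dots> = monom d x j * phi j z" unfolding phi_def by (simp add: sum_distrib_left)
  finally show ?thesis .
qed

lemma pt_ek:
  assumes s: "\<sigma> \<in> W" and j: "length j = d"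
  shows "perm_tensor d \<sigma> (ek j) = ek (perm_act d \<sigma> j)"
proof
  fix k
  show "perm_tensor d \<sigma> (ek j) k = ek (perm_act d \<sigma> j) k"
  proof (cases "length k = d")
    case True
    have "perm_act d (inv \<sigma>) k = j \<longleftrightarrow> k = perm_act d \<sigma> j"
      using pa_inv2[OF s True] pa_inv[OF s j] by metis
    then show ?thesis using True by (simp add: perm_tensor_def ek_def)
  next
    case False
    then have "k \<noteq> perm_act d \<sigma> j" by auto
    then show ?thesis using False by (simp add: perm_tensor_def ek_def)
  qed
qed

lemma f_ek: "j \<in> T \<Longrightarrow> f (ek j) = (\<lambda>k. monom d x j * ek j k)"
  by (rule ext) (auto simp: f_apply ek_def)

lemma ek_V: "j \<in> T \<Longrightarrow> ek j \<in> V"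
  by (auto simp: tensor_space_def ek_def)

lemma gen_U: "\<sigma> \<in> W \<Longrightarrow> z \<in> V \<Longrightarrow> (\<lambda>k. inverse (\<chi> \<sigma>) * z k - perm_tensor d \<sigma> z k) \<in> U"
  unfolding chi_sub_def by (rule ls_gen) blast

end

context pg3 begin

definition psi :: "nat list \<Rightarrow> (nat list \<Rightarrow> 'a) \<Rightarrow> 'a" where
  "psi j z = phi j z / phi j (ek j)"

lemma psi_lin: "psi j (\<lambda>k. \<Sum>i\<in>I. a i * g i k) = (\<Sum>i\<in>I. a i * psi j (g i))"
  unfolding psi_def phi_lin by (simp add: sum_divide_distrib)

lemma psi_add: "psi j (\<lambda>k. u k + v k) = psi j u + psi j v"
  unfolding psi_def phi_add by (simp add: add_divide_distrib)

lemma psi_diff: "psi j (\<lambda>k. u k - v k) = psi j u - psi j v"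
  unfolding psi_def phi_diff by (simp add: diff_divide_distrib)

lemma psi_scale: "psi j (\<lambda>k. c * u k) = c * psi j u"
  unfolding psi_def phi_scale by simp

lemma psi_U: "u \<in> U \<Longrightarrow> length j = d \<Longrightarrow> psi j u = 0"
  unfolding psi_def using phi_U by simp

lemma psi_f: "j \<in> T \<Longrightarrow> psi j (f z) = monom d x j * psi j z"
  unfolding psi_def using phi_f by simp

lemma Jmem: "j \<in> J \<Longrightarrow> j \<in> T \<and> length j = d \<and> good j \<and> rep j = j"
  by (simp add: Jset_iff tuples_def)

lemma psi_self: "j \<in> J \<Longrightarrow> psi j (ek j) = 1"
  unfolding psi_def using phi_ek_nz Jmem by simp

lemma psi_out: "k \<notin> orbit j \<Longrightarrow> psi j (ek k) = 0"
  unfolding psi_def using phi_ek_out by simp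

lemma psi_delta: "j \<in> J \<Longrightarrow> j' \<in> J \<Longrightarrow> psi j (ek j') = (if j' = j then 1 else 0)"
proof -
  assume j: "j \<in> J" and j': "j' \<in> J"
  show ?thesis
  proof (cases "j' = j")
    case True then show ?thesis using psi_self j by simp
  next
    case False
    then have "j' \<notin> orbit j" using Jset_orbit[OF j j'] by blast
    then show ?thesis using psi_out False by simp
  qed
qed

lemma finJ: "finite J" by (rule Jset_fin) simp
lemma finT: "finite T" by (rule tuples_fin) simp

lemma dec_ek:
  assumes k0: "k0 \<in> T"
  shows "(\<lambda>k. ek k0 k - (\<Sum>j\<in>J. psi j (ek k0) * ek j k)) \<in> U"
proof -
  have lk0: "length k0 = d" using k0 by (simp add: tuples_def)
  define j0 where "j0 = rep k0"
  have j0o: "j0 \<in> orbit k0" unfolding j0_def by (rule rep_in[OF lk0])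
  then obtain \<sigma> where s: "\<sigma> \<in> W" "j0 = perm_act d \<sigma> k0" by (auto simp: orbit_def)
  define \<tau> where "\<tau> = inv \<sigma>"
  have t: "\<tau> \<in> W" unfolding \<tau>_def by (rule Winv[OF s(1)])
  have k0j0: "k0 = perm_act d \<tau> j0" unfolding \<tau>_def s(2) using pa_inv[OF s(1) lk0] by simp
  have lj0: "length j0 = d" using s by simp
  have j0T: "j0 \<in> T" using s(2) pa_tuples[OF s(1) lk0] k0 by simp
  have rj0: "rep j0 = j0" using rep_eq[OF j0o lk0] j0_def by simp
  have k0o: "k0 \<in> orbit j0" using k0j0 t by (auto simp: orbit_def)
  have gU: "(\<lambda>k. inverse (\<chi> \<tau>) * ek j0 k - ek k0 k) \<in> U"
  proof -
    have e: "perm_tensor d \<tau> (ek j0) = ek k0" using pt_ek[OF t lj0] k0j0 by simp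
    show ?thesis using gen_U[OF t ek_V[OF j0T]] unfolding e .
  qed
  show ?thesis
  proof (cases "good j0")
    case True
    have j0J: "j0 \<in> J" using True j0T rj0 by (simp add: Jset_iff)
    have "psi j0 (\<lambda>k. inverse (\<chi> \<tau>) * ek j0 k - ek k0 k) = 0" using psi_U[OF gU lj0] .
    then have p0: "psi j0 (ek k0) = inverse (\<chi> \<tau>)"
      using psi_self[OF j0J] by (simp add: psi_diff psi_scale)
    have pj: "psi j (ek k0) = 0" if j: "j \<in> J" "j \<noteq> j0" for j
    proof -
      have "k0 \<notin> orbit j"
      proof
        assume "k0 \<in> orbit j"
        then have "rep k0 = rep j" using rep_eq Jmem[OF j(1)] by blast
        then show False using j Jmem[OF j(1)] j0_def by simp
      qed
      then show ?thesis by (rule psi_out)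
    qed
    have sm: "(\<Sum>j\<in>J. psi j (ek k0) * ek j k) = inverse (\<chi> \<tau>) * ek j0 k" for k
    proof -
      have "(\<Sum>j\<in>J. psi j (ek k0) * ek j k) = (\<Sum>j\<in>J. if j = j0 then inverse (\<chi> \<tau>) * ek j0 k else 0)"
        by (rule sum.cong) (auto simp: pj p0)
      also have "\<dots> = inverse (\<chi> \<tau>) * ek j0 k" using finJ j0J by (simp add: sum.delta')
      finally show ?thesis .
    qed
    have eq: "(\<lambda>k. ek k0 k - (\<Sum>j\<in>J. psi j (ek k0) * ek j k)) =
        (\<lambda>k. (- 1) * (inverse (\<chi> \<tau>) * ek j0 k - ek k0 k))"
      unfolding sm by (rule ext) (simp add: algebra_simps)
    show ?thesis unfolding eq using ls_scale[OF gU[unfolded chi_sub_def], of "- 1"] unfolding chi_sub_def .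
  next
    case False
    then obtain \<sigma>' where s': "\<sigma>' \<in> W" "perm_act d \<sigma>' j0 = j0" "\<chi> \<sigma>' \<noteq> 1"
      by (auto simp: good_def stab_def)
    have hU: "(\<lambda>k. inverse (\<chi> \<sigma>') * ek j0 k - ek j0 k) \<in> U"
    proof -
      have e: "perm_tensor d \<sigma>' (ek j0) = ek j0" using pt_ek[OF s'(1) lj0] s'(2) by simp
      show ?thesis using gen_U[OF s'(1) ek_V[OF j0T]] unfolding e .
    qed
    have ne: "inverse (\<chi> \<sigma>') - 1 \<noteq> 0" using s'(3) by (metis eq_iff_diff_eq_0 inverse_1 inverse_inverse_eq)
    have "ek j0 = (\<lambda>k. inverse (inverse (\<chi> \<sigma>') - 1) * (inverse (\<chi> \<sigma>') * ek j0 k - ek j0 k))"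
    proof
      fix k
      have "inverse (\<chi> \<sigma>') * ek j0 k - ek j0 k = (inverse (\<chi> \<sigma>') - 1) * ek j0 k" by (simp add: algebra_simps)
      then show "ek j0 k = inverse (inverse (\<chi> \<sigma>') - 1) * (inverse (\<chi> \<sigma>') * ek j0 k - ek j0 k)"
        using ne by simp
    qed
    then have ej0: "ek j0 \<in> U"
      using ls_scale[OF hU[unfolded chi_sub_def], of "inverse (inverse (\<chi> \<sigma>') - 1)"]
      unfolding chi_sub_def by metis
    have "(\<lambda>k. inverse (\<chi> \<tau>) * ek j0 k - (inverse (\<chi> \<tau>) * ek j0 k - ek k0 k)) \<in> U"
      using ls_diff[OF ls_scale[OF ej0[unfolded chi_sub_def]] gU[unfolded chi_sub_def]]
      unfolding chi_sub_def .
    moreover have "(\<lambda>k. inverse (\<chi> \<tau>) * ek j0 k - (inverse (\<chi> \<tau>) * ek j0 k - ek k0 k)) = ek k0"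
      by (rule ext) simp
    ultimately have ek0: "ek k0 \<in> U" by metis
    have pj: "psi j (ek k0) = 0" if j: "j \<in> J" for j
    proof -
      have "k0 \<notin> orbit j"
      proof
        assume "k0 \<in> orbit j"
        then have "good k0" using good_orbit Jmem[OF j] by blast
        then show False using False good_orbit[OF j0o lk0] by simp
      qed
      then show ?thesis by (rule psi_out)
    qed
    have "(\<lambda>k. ek k0 k - (\<Sum>j\<in>J. psi j (ek k0) * ek j k)) = ek k0"
      by (rule ext) (simp add: pj)
    then show ?thesis using ek0 by simp
  qed
qed

lemma z_expand: "z \<in> V \<Longrightarrow> z = (\<lambda>k. \<Sum>k0\<in>T. z k0 * ek k0 k)"
proof
  fix k assume z: "z \<in> V"
  have "(\<Sum>k0\<in>T. z k0 * ek k0 k) = (\<Sum>k0\<in>T. if k = k0 then z k else 0)"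
    by (rule sum.cong) (auto simp: ek_def)
  also have "\<dots> = (if k \<in> T then z k else 0)" using finT by (simp add: sum.delta)
  also have "\<dots> = z k" using z by (auto simp: tensor_space_def)
  finally show "z k = (\<Sum>k0\<in>T. z k0 * ek k0 k)" by simp
qed

lemma dec:
  assumes z: "z \<in> V"
  shows "(\<lambda>k. z k - (\<Sum>j\<in>J. psi j z * ek j k)) \<in> U"
proof -
  have pz: "psi j z = (\<Sum>k0\<in>T. z k0 * psi j (ek k0))" for j
    using psi_lin[where j=j and I=T and a=z and g=ek] z_expand[OF z] by simp
  have "(\<lambda>k. z k - (\<Sum>j\<in>J. psi j z * ek j k)) =
      (\<lambda>k. \<Sum>k0\<in>T. z k0 * (ek k0 k - (\<Sum>j\<in>J. psi j (ek k0) * ek j k)))"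
  proof
    fix k
    have "(\<Sum>k0\<in>T. z k0 * (ek k0 k - (\<Sum>j\<in>J. psi j (ek k0) * ek j k))) =
        (\<Sum>k0\<in>T. z k0 * ek k0 k) - (\<Sum>k0\<in>T. \<Sum>j\<in>J. z k0 * (psi j (ek k0) * ek j k))"
      by (simp add: right_diff_distrib sum_subtractf sum_distrib_left)
    also have "(\<Sum>k0\<in>T. \<Sum>j\<in>J. z k0 * (psi j (ek k0) * ek j k)) = (\<Sum>j\<in>J. \<Sum>k0\<in>T. z k0 * (psi j (ek k0) * ek j k))"
      by (rule sum.swap)
    also have "\<dots> = (\<Sum>j\<in>J. psi j z * ek j k)"
      unfolding pz sum_distrib_right by (simp add: mult_ac)
    also have "(\<Sum>k0\<in>T. z k0 * ek k0 k) = z k" using fun_cong[OF z_expand[OF z], of k] by simp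
    finally show "z k - (\<Sum>j\<in>J. psi j z * ek j k) =
        (\<Sum>k0\<in>T. z k0 * (ek k0 k - (\<Sum>j\<in>J. psi j (ek k0) * ek j k)))" by simp
  qed
  moreover have "(\<lambda>k. \<Sum>k0\<in>T. z k0 * (ek k0 k - (\<Sum>j\<in>J. psi j (ek k0) * ek j k))) \<in> U"
    using ls_sum[OF finT, of "\<lambda>k0 k. ek k0 k - (\<Sum>j\<in>J. psi j (ek k0) * ek j k)" _ z] dec_ek
    unfolding chi_sub_def by blast
  ultimately show ?thesis by simp
qed

end

context pg3 begin

lemma psi_lin1: "psi j (\<lambda>k. \<Sum>b\<in>B. a b * b k) = (\<Sum>b\<in>B. a b * psi j b)"
  using psi_lin[where j=j and I=B and a=a and g="\<lambda>s. s"] by simp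

lemma inj_ek: "inj_on (ek :: nat list \<Rightarrow> nat list \<Rightarrow> 'a) J"
proof (rule inj_onI)
  fix a b assume "(ek a :: nat list \<Rightarrow> 'a) = ek b"
  then have "(ek a a :: 'a) = ek b a" by (rule fun_cong)
  then show "a = b" by (simp add: ek_def split: if_splits)
qed

lemma trace_exists:
  "\<exists>B c. finite B \<and> B \<subseteq> V \<and> indep_mod U B \<and>
      (\<forall>v\<in>V. \<exists>u\<in>U. \<exists>a. v = (\<lambda>k. u k + (\<Sum>b\<in>B. a b * b k))) \<and>
      (\<forall>b\<in>B. (\<lambda>k. f b k - (\<Sum>b'\<in>B. c b b' * b' k)) \<in> U) \<and>
      (\<Sum>j\<in>J. monom d x j) = (\<Sum>b\<in>B. c b b)"
proof -
  define B0 where "B0 = (ek :: nat list \<Rightarrow> nat list \<Rightarrow> 'a) ` J"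
  define idx where "idx b = inv_into J (ek :: nat list \<Rightarrow> nat list \<Rightarrow> 'a) b" for b
  have idx: "j \<in> J \<Longrightarrow> idx (ek j) = j" for j by (simp add: idx_def inv_into_f_f[OF inj_ek])
  define c0 where "c0 b b' = (if b = b' then monom d x (idx b) else 0)" for b b'
  have re: "(\<Sum>b\<in>B0. h b) = (\<Sum>j\<in>J. h (ek j))" for h :: "(nat list \<Rightarrow> 'a) \<Rightarrow> 'a"
    unfolding B0_def using sum.reindex[OF inj_ek, of h] by simp
  have fin: "finite B0" unfolding B0_def using finJ by simp
  have sub: "B0 \<subseteq> V" unfolding B0_def using ek_V Jmem by blast
  have ind: "indep_mod U B0"
    unfolding indep_mod_def
  proof (intro allI impI ballI)
    fix a b assume h: "(\<lambda>k. \<Sum>b\<in>B0. a b * b k) \<in> U" and b: "b \<in> B0"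
    then obtain j where j: "j \<in> J" "b = ek j" unfolding B0_def by blast
    have "0 = psi j (\<lambda>k. \<Sum>b\<in>B0. a b * b k)" using psi_U[OF h] Jmem[OF j(1)] by simp
    also have "\<dots> = (\<Sum>j'\<in>J. a (ek j') * psi j (ek j'))" unfolding psi_lin1 by (rule re)
    also have "\<dots> = (\<Sum>j'\<in>J. if j' = j then a (ek j') else 0)"
      by (rule sum.cong) (simp_all add: psi_delta[OF j(1)])
    also have "\<dots> = a b" using finJ j by (simp add: sum.delta)
    finally show "a b = 0" by simp
  qed
  have span: "\<forall>v\<in>V. \<exists>u\<in>U. \<exists>a. v = (\<lambda>k. u k + (\<Sum>b\<in>B0. a b * b k))"
  proof
    fix v assume v: "v \<in> V"
    have eqn: "v = (\<lambda>k. (v k - (\<Sum>j\<in>J. psi j v * ek j k)) + (\<Sum>b\<in>B0. psi (idx b) v * b k))"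
    proof
      fix k show "v k = (v k - (\<Sum>j\<in>J. psi j v * ek j k)) + (\<Sum>b\<in>B0. psi (idx b) v * b k)"
        unfolding re using idx by simp
    qed
    show "\<exists>u\<in>U. \<exists>a. v = (\<lambda>k. u k + (\<Sum>b\<in>B0. a b * b k))"
      by (rule bexI[OF _ dec[OF v]], rule exI[of _ "\<lambda>b. psi (idx b) v"]) (fact eqn)
  qed
  have eig: "\<forall>b\<in>B0. (\<lambda>k. f b k - (\<Sum>b'\<in>B0. c0 b b' * b' k)) \<in> U"
  proof
    fix b assume "b \<in> B0"
    then obtain j where j: "j \<in> J" "b = ek j" unfolding B0_def by blast
    have "(\<lambda>k. f b k - (\<Sum>b'\<in>B0. c0 b b' * b' k)) = (\<lambda>k. 0)"
    proof
      fix k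
      have "(\<Sum>b'\<in>B0. c0 b b' * b' k) = (\<Sum>j'\<in>J. if j = j' then monom d x j * ek j' k else 0)"
        unfolding re j(2)
      proof (rule sum.cong[OF refl])
        fix j' assume j': "j' \<in> J"
        show "c0 (ek j) (ek j') * ek j' k = (if j = j' then monom d x j * ek j' k else 0)"
          unfolding c0_def using inj_on_eq_iff[OF inj_ek j(1) j'] idx[OF j(1)] idx[OF j'] by simp
      qed
      also have "\<dots> = monom d x j * ek j k" using finJ j(1) by (simp add: sum.delta)
      finally show "f b k - (\<Sum>b'\<in>B0. c0 b b' * b' k) = 0"
        using f_ek Jmem[OF j(1)] j(2) by simp
    qed
    then show "(\<lambda>k. f b k - (\<Sum>b'\<in>B0. c0 b b' * b' k)) \<in> U" unfolding chi_sub_def by (simp only: ls_zero)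
  qed
  have tr: "(\<Sum>j\<in>J. monom d x j) = (\<Sum>b\<in>B0. c0 b b)"
    unfolding re c0_def using idx by simp
  show ?thesis by (intro exI[of _ B0] exI[of _ c0] conjI fin sub ind span eig tr)
qed

end

context pg3 begin

lemma trace_unique:
  assumes fin: "finite B" and BV: "B \<subseteq> V" and ind: "indep_mod U B"
  and span: "\<forall>v\<in>V. \<exists>u\<in>U. \<exists>a. v = (\<lambda>k. u k + (\<Sum>b\<in>B. a b * b k))"
  and eig: "\<forall>b\<in>B. (\<lambda>k. f b k - (\<Sum>b'\<in>B. c b b' * b' k)) \<in> U"
  shows "(\<Sum>b\<in>B. c b b) = (\<Sum>j\<in>J. monom d x j)"
proof -
  have "\<forall>j\<in>J. \<exists>a. (\<lambda>k. ek j k - (\<Sum>b\<in>B. a b * b k)) \<in> U"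
  proof
    fix j assume j: "j \<in> J"
    have "ek j \<in> V" using ek_V Jmem[OF j] by blast
    then obtain u a where u: "u \<in> U" "ek j = (\<lambda>k. u k + (\<Sum>b\<in>B. a b * b k))" using span by blast
    have "(\<lambda>k. ek j k - (\<Sum>b\<in>B. a b * b k)) = u"
    proof
      fix k show "ek j k - (\<Sum>b\<in>B. a b * b k) = u k" using fun_cong[OF u(2), of k] by simp
    qed
    then have "(\<lambda>k. ek j k - (\<Sum>b\<in>B. a b * b k)) \<in> U" using u(1) by simp
    then show "\<exists>a. (\<lambda>k. ek j k - (\<Sum>b\<in>B. a b * b k)) \<in> U" by (rule exI[of _ a])
  qed
  then have "\<exists>A. \<forall>j\<in>J. (\<lambda>k. ek j k - (\<Sum>b\<in>B. A j b * b k)) \<in> U" by (rule bchoice)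
  then obtain A where A: "\<forall>j\<in>J. (\<lambda>k. ek j k - (\<Sum>b\<in>B. A j b * b k)) \<in> U" by (rule exE)
  have i: "(\<Sum>b\<in>B. A j b * psi j' b) = (if j = j' then 1 else 0)" if j: "j \<in> J" "j' \<in> J" for j j'
  proof -
    have "0 = psi j' (\<lambda>k. ek j k - (\<Sum>b\<in>B. A j b * b k))" using psi_U A j Jmem by simp
    also have "\<dots> = psi j' (ek j) - (\<Sum>b\<in>B. A j b * psi j' b)" by (simp add: psi_diff psi_lin1)
    finally show ?thesis using psi_delta[OF j(2) j(1)] by simp
  qed
  have ii: "(\<Sum>j\<in>J. psi j b * A j b') = (if b' = b then 1 else 0)" if b: "b \<in> B" "b' \<in> B" for b b'
  proof -
    define \<alpha> where "\<alpha> b' = (if b' = b then 1 else 0) - (\<Sum>j\<in>J. psi j b * A j b')" for b'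
    have bV: "b \<in> V" using b BV by blast
    have wU: "(\<lambda>k. (b k - (\<Sum>j\<in>J. psi j b * ek j k)) + (\<Sum>j\<in>J. psi j b * (ek j k - (\<Sum>b'\<in>B. A j b' * b' k)))) \<in> U"
      using ls_add[OF dec[OF bV, unfolded chi_sub_def] ls_sum[OF finJ, of "\<lambda>j k. ek j k - (\<Sum>b'\<in>B. A j b' * b' k)" _ "\<lambda>j. psi j b"]]
        A unfolding chi_sub_def by blast
    have "(\<lambda>k. (b k - (\<Sum>j\<in>J. psi j b * ek j k)) + (\<Sum>j\<in>J. psi j b * (ek j k - (\<Sum>b'\<in>B. A j b' * b' k))))
        = (\<lambda>k. \<Sum>b'\<in>B. \<alpha> b' * b' k)"
    proof
      fix k
      have 1: "(\<Sum>b'\<in>B. \<alpha> b' * b' k) = b k - (\<Sum>b'\<in>B. \<Sum>j\<in>J. psi j b * A j b' * b' k)"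
      proof -
        have "(\<Sum>b'\<in>B. \<alpha> b' * b' k) = (\<Sum>b'\<in>B. (if b' = b then b' k else 0)) - (\<Sum>b'\<in>B. (\<Sum>j\<in>J. psi j b * A j b') * b' k)"
          unfolding sum_subtractf[symmetric]
        proof (rule sum.cong[OF refl])
          fix b' show "\<alpha> b' * b' k = (if b' = b then b' k else 0) - (\<Sum>j\<in>J. psi j b * A j b') * b' k"
            unfolding \<alpha>_def by (cases "b' = b") (simp_all add: left_diff_distrib)
        qed
        also have "(\<Sum>b'\<in>B. (if b' = b then b' k else 0)) = b k" using fin b(1) by (simp add: sum.delta')
        finally show ?thesis by (simp add: sum_distrib_right)
      qed
      have 2: "(\<Sum>j\<in>J. psi j b * (ek j k - (\<Sum>b'\<in>B. A j b' * b' k))) =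
          (\<Sum>j\<in>J. psi j b * ek j k) - (\<Sum>j\<in>J. \<Sum>b'\<in>B. psi j b * A j b' * b' k)"
        by (simp add: right_diff_distrib sum_subtractf sum_distrib_left mult.assoc)
      have 3: "(\<Sum>j\<in>J. \<Sum>b'\<in>B. psi j b * A j b' * b' k) = (\<Sum>b'\<in>B. \<Sum>j\<in>J. psi j b * A j b' * b' k)"
        by (rule sum.swap)
      show "(b k - (\<Sum>j\<in>J. psi j b * ek j k)) + (\<Sum>j\<in>J. psi j b * (ek j k - (\<Sum>b'\<in>B. A j b' * b' k)))
          = (\<Sum>b'\<in>B. \<alpha> b' * b' k)"
        unfolding 1 2 3 by simp
    qed
    then have "(\<lambda>k. \<Sum>b'\<in>B. \<alpha> b' * b' k) \<in> U" using wU by metis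
    then have "\<alpha> b' = 0" using ind b(2) unfolding indep_mod_def by blast
    then show ?thesis unfolding \<alpha>_def by simp
  qed
  have iii: "(\<Sum>b'\<in>B. c b b' * psi j b') = monom d x j * psi j b" if j: "j \<in> J" and b: "b \<in> B" for j b
  proof -
    have "0 = psi j (\<lambda>k. f b k - (\<Sum>b'\<in>B. c b b' * b' k))" using psi_U eig b Jmem[OF j] by simp
    also have "\<dots> = psi j (f b) - (\<Sum>b'\<in>B. c b b' * psi j b')" by (simp add: psi_diff psi_lin1)
    also have "psi j (f b) = monom d x j * psi j b" using psi_f Jmem[OF j] by simp
    finally show ?thesis by simp
  qed
  have "(\<Sum>b\<in>B. c b b) = (\<Sum>b\<in>B. \<Sum>b'\<in>B. c b b' * (if b = b' then 1 else 0))"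
  proof (rule sum.cong[OF refl])
    fix b assume "b \<in> B"
    have "(\<Sum>b'\<in>B. c b b' * (if b = b' then 1 else 0)) = (\<Sum>b'\<in>B. if b = b' then c b b' else 0)"
      by (rule sum.cong) simp_all
    then show "c b b = (\<Sum>b'\<in>B. c b b' * (if b = b' then 1 else 0))"
      using fin \<open>b \<in> B\<close> by (simp add: sum.delta)
  qed
  also have "\<dots> = (\<Sum>b\<in>B. \<Sum>b'\<in>B. c b b' * (\<Sum>j\<in>J. psi j b' * A j b))"
    by (intro sum.cong refl) (simp add: ii)
  also have "\<dots> = (\<Sum>b\<in>B. \<Sum>j\<in>J. \<Sum>b'\<in>B. A j b * (c b b' * psi j b'))"
  proof (rule sum.cong[OF refl])
    fix b
    have "(\<Sum>b'\<in>B. c b b' * (\<Sum>j\<in>J. psi j b' * A j b)) = (\<Sum>b'\<in>B. \<Sum>j\<in>J. A j b * (c b b' * psi j b'))"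
      by (simp add: sum_distrib_left mult_ac)
    also have "\<dots> = (\<Sum>j\<in>J. \<Sum>b'\<in>B. A j b * (c b b' * psi j b'))" by (rule sum.swap)
    finally show "(\<Sum>b'\<in>B. c b b' * (\<Sum>j\<in>J. psi j b' * A j b)) = (\<Sum>j\<in>J. \<Sum>b'\<in>B. A j b * (c b b' * psi j b'))" .
  qed
  also have "\<dots> = (\<Sum>j\<in>J. \<Sum>b\<in>B. \<Sum>b'\<in>B. A j b * (c b b' * psi j b'))" by (rule sum.swap)
  also have "\<dots> = (\<Sum>j\<in>J. \<Sum>b\<in>B. A j b * (monom d x j * psi j b))"
  proof (intro sum.cong refl)
    fix j b assume j: "j \<in> J" and b: "b \<in> B"
    have "(\<Sum>b'\<in>B. A j b * (c b b' * psi j b')) = A j b * (\<Sum>b'\<in>B. c b b' * psi j b')"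
      by (simp add: sum_distrib_left)
    then show "(\<Sum>b'\<in>B. A j b * (c b b' * psi j b')) = A j b * (monom d x j * psi j b)"
      using iii[OF j b] by simp
  qed
  also have "\<dots> = (\<Sum>j\<in>J. monom d x j * (\<Sum>b\<in>B. A j b * psi j b))"
    by (simp add: sum_distrib_left mult_ac)
  also have "\<dots> = (\<Sum>j\<in>J. monom d x j)"
    by (intro sum.cong refl) (simp add: i)
  finally show ?thesis .
qed

end

context pg3 begin

lemma part3: "char_trace d W \<chi> n x = g_poly d W \<chi> n x"
  unfolding char_trace_def quot_trace_def
proof (rule the_equality)
  have gp: "g_poly d W \<chi> n x = (\<Sum>j\<in>J. monom d x j)" by (simp add: g_poly_def monom_def)
  show "\<exists>B c. finite B \<and> B \<subseteq> V \<and> indep_mod U B \<and>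
      (\<forall>v\<in>V. \<exists>u\<in>U. \<exists>a. v = (\<lambda>k. u k + (\<Sum>b\<in>B. a b * b k))) \<and>
      (\<forall>b\<in>B. (\<lambda>k. f b k - (\<Sum>b'\<in>B. c b b' * b' k)) \<in> U) \<and>
      g_poly d W \<chi> n x = (\<Sum>b\<in>B. c b b)"
    unfolding gp by (rule trace_exists)
  fix t assume "\<exists>B c. finite B \<and> B \<subseteq> V \<and> indep_mod U B \<and>
      (\<forall>v\<in>V. \<exists>u\<in>U. \<exists>a. v = (\<lambda>k. u k + (\<Sum>b\<in>B. a b * b k))) \<and>
      (\<forall>b\<in>B. (\<lambda>k. f b k - (\<Sum>b'\<in>B. c b b' * b' k)) \<in> U) \<and>
      t = (\<Sum>b\<in>B. c b b)"
  then obtain B c where h: "finite B" "B \<subseteq> V" "indep_mod U B"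
      "\<forall>v\<in>V. \<exists>u\<in>U. \<exists>a. v = (\<lambda>k. u k + (\<Sum>b\<in>B. a b * b k))"
      "\<forall>b\<in>B. (\<lambda>k. f b k - (\<Sum>b'\<in>B. c b b' * b' k)) \<in> U"
      "t = (\<Sum>b\<in>B. c b b)" by (elim exE conjE)
  show "t = g_poly d W \<chi> n x" unfolding gp h(6) by (rule trace_unique[OF h(1-5)])
qed

end

theorem lemma2p1p1:
  fixes d :: nat and W :: "(nat \<Rightarrow> nat) set" and \<chi> :: "(nat \<Rightarrow> nat) \<Rightarrow> 'a::field_char_0"
  assumes "is_perm_group d W" and "is_lin_char W \<chi>"
  shows "(\<forall>n. \<forall>\<pi>. \<pi> permutes {0..n} \<longrightarrow> (\<forall>x. g_poly d W \<chi> n (x \<circ> \<pi>) = g_poly d W \<chi> n x))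
       \<and> (\<forall>n x. g_spec d W \<chi> n x = g_poly d W \<chi> n x)
       \<and> (\<forall>n x. char_trace d W \<chi> n x = g_poly d W \<chi> n x)"
proof -
  interpret pg d W \<chi> by (rule pg.intro[OF assms])
  have 3: "char_trace d W \<chi> n x = g_poly d W \<chi> n x" for n x
  proof -
    interpret q: pg3 d W \<chi> n x by unfold_locales (rule assms)+
    show ?thesis by (rule q.part3)
  qed
  show ?thesis using part1 part2 3 by blast
qed

end
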